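(* Let $m \geq 1$ and let $n = p_1 p_2 \cdots p_m$, where $p_1 < p_2 < \cdots < p_m$ are primes. Then the zero-divisor graph $\Gamma(\mathbb{Z}_n)$ is a very cost effective graph.
   Context: $\mathbb{Z}_n$ is the ring of residue classes modulo $n$. The zero-divisor graph $\Gamma(\mathbb{Z}_n)$ has as vertices the nonzero zero-divisors of $\mathbb{Z}_n$ (nonzero $z$ such that $rz=0$ for some nonzero $r$), two distinct vertices being adjacent iff their product is $0$. For a graph $G=(V,E)$ and $S\subseteq V$, a vertex $v\in S$ is very cost effective if $|N(v)\cap S| < |N(v)\cap (V\setminus S)|$, where $N(v)$ is the open neighborhood of $v$; $S$ is very cost effective if every vertex of $S$ is very cost effective. A bipartition $\{S, V\setminus S\}$ of $V$ is very cost effective if both $S$ and $V\setminus S$ are very cost effective sets, and $G$ is a very cost effective graph if it has a very cost effective bipartition. *)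

theory Defs
  imports "HOL-Computational_Algebra.Primes"
begin

text \<open>Simple graphs are given by a vertex set V and a symmetric irreflexive
adjacency relation E (only its restriction to V matters).\<close>

definition nbhd :: "'a set \<Rightarrow> ('a \<Rightarrow> 'a \<Rightarrow> bool) \<Rightarrow> 'a \<Rightarrow> 'a set" where
  "nbhd V E v = {u \<in> V. E v u}"

definition very_cost_effective_vertex ::
  "'a set \<Rightarrow> ('a \<Rightarrow> 'a \<Rightarrow> bool) \<Rightarrow> 'a set \<Rightarrow> 'a \<Rightarrow> bool" where
  "very_cost_effective_vertex V E S v \<longleftrightarrow>
     card (nbhd V E v \<inter> S) < card (nbhd V E v \<inter> (V - S))"

definition very_cost_effective_set ::
  "'a set \<Rightarrow> ('a \<Rightarrow> 'a \<Rightarrow> bool) \<Rightarrow> 'a set \<Rightarrow> bool" where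
  "very_cost_effective_set V E S \<longleftrightarrow> S \<subseteq> V \<and> (\<forall>v\<in>S. very_cost_effective_vertex V E S v)"

definition very_cost_effective_graph :: "'a set \<Rightarrow> ('a \<Rightarrow> 'a \<Rightarrow> bool) \<Rightarrow> bool" where
  "very_cost_effective_graph V E \<longleftrightarrow>
     (\<exists>S. S \<subseteq> V \<and> very_cost_effective_set V E S \<and> very_cost_effective_set V E (V - S))"

text \<open>Zero-divisor graph of Z_n, residues represented by 0..n-1.\<close>

definition zd_vertices :: "nat \<Rightarrow> nat set" where
  "zd_vertices n = {z. 0 < z \<and> z < n \<and> (\<exists>r. 0 < r \<and> r < n \<and> (r * z) mod n = 0)}"

definition zd_adj :: "nat \<Rightarrow> nat \<Rightarrow> nat \<Rightarrow> bool" where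
  "zd_adj n x y \<longleftrightarrow> x \<noteq> y \<and> (x * y) mod n = 0"

end

theory Submission
  imports Defs "HOL-Number_Theory.Cong"
begin

lemma zd_gen:
  fixes q k n :: nat
  assumes q: "prime q" and nqk: "n = q * k" and nk: "\<not> q dvd k"
  shows "very_cost_effective_graph (zd_vertices n) (zd_adj n)"
proof -
  define V where "V = zd_vertices n"
  define E where "E = zd_adj n"
  define S where "S = {x\<in>V. \<not> q dvd x}"
  have q2: "q \<ge> 2" using q prime_ge_2_nat by blast
  have kpos: "k > 0" using nk by (cases k) auto
  have npos: "n > 0" using nqk kpos q2 by simp
  have kn: "k < n" using nqk kpos q2 by simp
  have qn: "q dvd n" using nqk by simp
  have finV: "finite V" unfolding V_def zd_vertices_def
    by (rule finite_subset[of _ "{..<n}"]) auto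
  have SV: "S \<subseteq> V" unfolding S_def by auto
  have VSS: "V - (V - S) = S" using SV by auto
  have nb: "nbhd V E x = {y\<in>V. x \<noteq> y \<and> n dvd x * y}" for x
    unfolding nbhd_def E_def zd_adj_def by (auto simp: dvd_eq_mod_eq_0)
  have inV: "y \<in> V" if "0 < y" "y < n" "0 < r" "r < n" "n dvd r * y" for y r
    using that unfolding V_def zd_vertices_def by (auto simp: dvd_eq_mod_eq_0)
  have A: "very_cost_effective_vertex V E S x" if xS: "x \<in> S" for x
  proof -
    have xV: "x \<in> V" and nqx: "\<not> q dvd x" using xS unfolding S_def by auto
    from xV obtain r where r: "0 < r" "r < n" "n dvd r * x" and x: "0 < x" "x < n"
      unfolding V_def zd_vertices_def by (auto simp: dvd_eq_mod_eq_0)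
    define g where "g = gcd x n"
    have g1: "g \<noteq> 1"
    proof
      assume "g = 1"
      then have "coprime n x" unfolding g_def by (simp add: coprime_iff_gcd_eq_1 gcd.commute)
      then have "n dvd r" using r(3) by (simp add: coprime_dvd_mult_left_iff)
      then show False using r(1,2) by (auto dest: dvd_imp_le)
    qed
    have gpos: "g > 0" unfolding g_def using x by simp
    have gx: "g dvd x" "g dvd n" unfolding g_def by auto
    have gle: "g < n" using gx(1) x by (meson dvd_imp_le le_less_trans)
    define y where "y = n div g"
    have yg: "g * y = n" unfolding y_def using gx(2) by simp
    have ypos: "y > 0" using yg npos by (cases y) auto
    have "g \<ge> 2" using g1 gpos by linarith
    then have "1 * y < g * y" using ypos by (intro mult_strict_right_mono) auto
    then have ylt: "y < n" using yg by simp
    have yV: "y \<in> V" using inV[OF ypos ylt gpos gle] yg by simp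
    have qg: "\<not> q dvd g" using nqx gx(1) dvd_trans by blast
    have qy: "q dvd y" using qn yg qg q by (metis prime_dvd_mult_iff)
    obtain x' where "x = g * x'" using gx(1) by blast
    then have "x * y = x' * n" using yg by (simp add: ac_simps)
    then have ndv: "n dvd x * y" by simp
    have "y \<in> nbhd V E x \<inter> (V - S)" using yV qy nqx ndv unfolding nb S_def by auto
    moreover have "finite (nbhd V E x \<inter> (V - S))" using finV unfolding nb by simp
    ultimately have c: "card (nbhd V E x \<inter> (V - S)) > 0"
      using card_gt_0_iff by blast
    have "nbhd V E x \<inter> S = {}"
    proof (rule ccontr)
      assume "nbhd V E x \<inter> S \<noteq> {}"
      then obtain z where "z \<in> V" "n dvd x * z" "\<not> q dvd z" unfolding nb S_def by auto
      then have "q dvd x * z" using qn dvd_trans by blast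
      then show False using q nqx \<open>\<not> q dvd z\<close> by (simp add: prime_dvd_mult_iff)
    qed
    then show ?thesis using c unfolding very_cost_effective_vertex_def by simp
  qed
  have B: "very_cost_effective_vertex V E (V - S) x" if xS: "x \<in> V - S" for x
  proof -
    have xV: "x \<in> V" and qx: "q dvd x" using xS unfolding S_def by auto
    from xV have x: "0 < x" "x < n"
      unfolding V_def zd_vertices_def by auto
    define N where "N = nbhd V E x"
    define Aa where "Aa = N \<inter> (V - S)"
    define Bb where "Bb = N \<inter> S"
    define f where "f y = (y + k) mod n" for y
    obtain x' where x': "x = q * x'" using qx by blast
    have nxk: "n dvd x * k" using x' nqk by (simp add: ac_simps)
    have Aa_char: "y \<in> Aa \<longleftrightarrow> y \<in> V \<and> x \<noteq> y \<and> n dvd x * y \<and> q dvd y" for y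
      unfolding Aa_def N_def nb S_def by auto
    have Bb_char: "y \<in> Bb \<longleftrightarrow> y \<in> V \<and> x \<noteq> y \<and> n dvd x * y \<and> \<not> q dvd y" for y
      unfolding Bb_def N_def nb S_def by auto
    have yr: "0 < y \<and> y < n" if "y \<in> V" for y using that unfolding V_def zd_vertices_def by auto
    have img: "f ` Aa \<subseteq> Bb"
    proof
      fix z assume "z \<in> f ` Aa"
      then obtain y where yA: "y \<in> Aa" and zf: "z = (y + k) mod n" unfolding f_def by auto
      have yV: "y \<in> V" "n dvd x * y" "q dvd y" using yA Aa_char by auto
      have "q dvd z \<longleftrightarrow> q dvd (y + k)" using zf qn by (simp add: dvd_mod_iff)
      also have "\<dots> \<longleftrightarrow> q dvd k" using yV(3) by (simp add: dvd_add_right_iff)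
      finally have nqz: "\<not> q dvd z" using nk by simp
      have zpos: "z > 0" using nqz by (cases z) auto
      have zlt: "z < n" using zf npos by simp
      have "n dvd x * (y + k)" using yV(2) nxk by (simp add: distrib_left)
      then have ndz: "n dvd x * z" using zf by (simp add: dvd_eq_mod_eq_0 mod_mult_right_eq)
      have "z \<in> V" using inV[OF zpos zlt x(1) x(2)] ndz by (simp add: ac_simps)
      moreover have "x \<noteq> z" using qx nqz by auto
      ultimately show "z \<in> Bb" using Bb_char ndz nqz by auto
    qed
    have inj: "inj_on f Aa"
    proof
      fix y1 y2 assume "y1 \<in> Aa" "y2 \<in> Aa" "f y1 = f y2"
      then have "[y1 + k = y2 + k] (mod n)" "y1 < n" "y2 < n"
        unfolding f_def cong_def using Aa_char yr by auto
      then have "[y1 = y2] (mod n)" by (simp add: cong_add_rcancel_nat)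
      then show "y1 = y2" using \<open>y1 < n\<close> \<open>y2 < n\<close> unfolding cong_def by simp
    qed
    have kB: "k \<in> Bb"
    proof -
      have "k \<in> V" using inV[OF kpos kn x(1) x(2)] nxk by (simp add: ac_simps)
      moreover have "x \<noteq> k" using qx nk by auto
      ultimately show ?thesis using Bb_char nxk nk by auto
    qed
    have kA: "k \<notin> f ` Aa"
    proof
      assume "k \<in> f ` Aa"
      then obtain y where yA: "y \<in> Aa" and "(y + k) mod n = k" unfolding f_def by auto
      then have "[y + k = 0 + k] (mod n)" using kn unfolding cong_def by simp
      then have "[y = 0] (mod n)" using cong_add_rcancel_nat[of y k 0 n] by simp
      moreover have "0 < y" "y < n" using yA Aa_char yr by auto
      ultimately show False unfolding cong_def by simp
    qed
    have finB: "finite Bb" unfolding Bb_def N_def using finV by (simp add: nb)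
    have "f ` Aa \<subset> Bb" using img kB kA by auto
    then have "card (f ` Aa) < card Bb" using finB by (simp add: psubset_card_mono)
    moreover have "card (f ` Aa) = card Aa" using inj by (simp add: card_image)
    ultimately have "card Aa < card Bb" by simp
    then show ?thesis unfolding very_cost_effective_vertex_def VSS Aa_def Bb_def N_def
      by (simp add: Int_commute)
  qed
  have "very_cost_effective_set V E S" unfolding very_cost_effective_set_def using SV A by auto
  moreover have "very_cost_effective_set V E (V - S)" unfolding very_cost_effective_set_def using B by auto
  ultimately show ?thesis unfolding very_cost_effective_graph_def V_def[symmetric] E_def[symmetric]
    using SV by blast
qed

theorem mainTheorem1:
  fixes m n :: nat and p :: "nat \<Rightarrow> nat"
  assumes "m \<ge> 1"
    and "\<forall>i\<in>{1..m}. prime (p i)"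
    and "\<forall>i\<in>{1..m}. \<forall>j\<in>{1..m}. i < j \<longrightarrow> p i < p j"
    and "n = (\<Prod>i\<in>{1..m}. p i)"
  shows "very_cost_effective_graph (zd_vertices n) (zd_adj n)"
proof (rule zd_gen)
  have "{1..m} = insert 1 {2..m}" using assms(1) by auto
  then show "n = p 1 * (\<Prod>i\<in>{2..m}. p i)" using assms(4) by simp
  show q: "prime (p 1)" using assms(1,2) by auto
  show "\<not> p 1 dvd (\<Prod>i\<in>{2..m}. p i)"
  proof
    assume "p 1 dvd (\<Prod>i\<in>{2..m}. p i)"
    then obtain i where i: "i \<in> {2..m}" "p 1 dvd p i" using q by (auto simp: prime_dvd_prod_iff)
    then have "prime (p i)" using assms(2) by auto
    then have "p 1 = p i" using i q by (simp add: primes_dvd_imp_eq)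
    moreover have "p 1 < p i" using assms(1,3) i by auto
    ultimately show False by simp
  qed
qed

end
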